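(* Let $1 \le s \le r$ be fixed integers and let $n \ge r$. Let $H_1, H_2, \ldots$ be independent, each uniformly distributed over the $r$-element subsets of $[n] = \{1, \ldots, n\}$. An $s$-element subset $S \subseteq [n]$ is said to be collected by time $k$ if $S \subseteq H_t$ for some $t \le k$. Let $T^{(r,s)}$ be the smallest $k$ such that all $\binom{n}{s}$ $s$-element subsets of $[n]$ have been collected by time $k$. Then, as $n \to \infty$ (with $r, s$ fixed), \[ \mathbb{E}\, T^{(r,s)} = \frac{\binom{n}{s}\log\binom{n}{s}}{\binom{r}{s}}\,(1+o(1)). \]
   Context: In each round $t$ one draws $r$ distinct coupons uniformly at random (without replacement) from the universe $[n]$, independently across rounds; all $\binom{r}{s}$ $s$-subsets ("super-coupons") of the drawn $r$-set are then marked as collected. *)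

theory Defs
  imports "HOL-Probability.Probability"
begin

definition round_pmf :: "nat \<Rightarrow> nat \<Rightarrow> nat set pmf" where
  "round_pmf n r = pmf_of_set {H. H \<subseteq> {1..n} \<and> card H = r}"

text \<open>The whole process: i.i.d. rounds H_1, H_2, ... (stream index t corresponds to round t+1).\<close>
definition rounds :: "nat \<Rightarrow> nat \<Rightarrow> nat set stream measure" where
  "rounds n r = stream_space (measure_pmf (round_pmf n r))"

definition all_collected :: "nat \<Rightarrow> nat \<Rightarrow> nat set stream \<Rightarrow> nat \<Rightarrow> bool" where
  "all_collected n s \<omega> k =
     (\<forall>S. S \<subseteq> {1..n} \<and> card S = s \<longrightarrow> (\<exists>t<k. S \<subseteq> \<omega> !! t))"

definition T_time :: "nat \<Rightarrow> nat \<Rightarrow> nat set stream \<Rightarrow> nat" where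
  "T_time n s \<omega> = (LEAST k. all_collected n s \<omega> k)"

definition expected_T :: "nat \<Rightarrow> nat \<Rightarrow> nat \<Rightarrow> ennreal" where
  "expected_T n r s = (\<integral>\<^sup>+ \<omega>. ennreal (real (T_time n s \<omega>)) \<partial>rounds n r)"

end

theory Submission
  imports Defs "HOL-Real_Asymp.Real_Asymp"
begin


lemma meas_allB[measurable]:
  "{\<omega>. \<forall>t<k. \<omega> !! t \<in> B} \<in> sets (stream_space (measure_pmf P))"
proof -
  have [measurable]: "B \<in> sets (measure_pmf P)" by simp
  have "Measurable.pred (stream_space (measure_pmf P)) (\<lambda>\<omega>. \<forall>t<k. \<omega> !! t \<in> B)"
    by measurable
  then show ?thesis by (simp add: pred_def space_stream_space)
qed

lemma emeasure_allB:
  "emeasure (stream_space (measure_pmf P)) {\<omega>. \<forall>t<k. \<omega> !! t \<in> B} = (emeasure (measure_pmf P) B)^k"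
proof (induction k)
  case 0
  interpret S: prob_space "stream_space (measure_pmf P)"
    by (rule prob_space.prob_space_stream_space[OF prob_space_measure_pmf])
  show ?case using S.emeasure_space_1 by (simp add: space_stream_space)
next
  case (Suc k)
  have "emeasure (stream_space (measure_pmf P)) {\<omega>. \<forall>t<Suc k. \<omega> !! t \<in> B}
     = (\<integral>\<^sup>+x. emeasure (stream_space (measure_pmf P)) {X \<in> space (stream_space (measure_pmf P)). x ## X \<in> {\<omega>. \<forall>t<Suc k. \<omega> !! t \<in> B}} \<partial>measure_pmf P)"
    by (rule prob_space.emeasure_stream_space[OF prob_space_measure_pmf]) (rule meas_allB)
  also have "\<dots> = (\<integral>\<^sup>+x. indicator B x * (emeasure (measure_pmf P) B)^k \<partial>measure_pmf P)"
  proof (rule nn_integral_cong)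
    fix x
    have "{X \<in> space (stream_space (measure_pmf P)). x ## X \<in> {\<omega>. \<forall>t<Suc k. \<omega> !! t \<in> B}}
       = (if x \<in> B then {\<omega>. \<forall>t<k. \<omega> !! t \<in> B} else {})"
      by (auto simp: space_stream_space Stream_snth split: nat.splits)
    then show "emeasure (stream_space (measure_pmf P)) {X \<in> space (stream_space (measure_pmf P)). x ## X \<in> {\<omega>. \<forall>t<Suc k. \<omega> !! t \<in> B}} = indicator B x * (emeasure (measure_pmf P) B)^k"
      using Suc by (simp add: indicator_def)
  qed
  also have "\<dots> = emeasure (measure_pmf P) B * (emeasure (measure_pmf P) B)^k"
    by (simp add: nn_integral_multc)
  finally show ?case by simp
qed



lemma card_supsets:
  assumes T: "T \<subseteq> {1..n}" and tr: "card T \<le> r"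
  shows "card {H. H \<subseteq> {1..n} \<and> card H = r \<and> T \<subseteq> H} = (n - card T) choose (r - card T)"
proof -
  have fT: "finite T" using T finite_subset by blast
  have eq: "{H. H \<subseteq> {1..n} \<and> card H = r \<and> T \<subseteq> H} = (\<lambda>B. B \<union> T) ` {B. B \<subseteq> {1..n} - T \<and> card B = r - card T}"
  proof (intro equalityI subsetI)
    fix H assume H: "H \<in> {H. H \<subseteq> {1..n} \<and> card H = r \<and> T \<subseteq> H}"
    have fH: "finite H" using H finite_subset by blast
    have "card (H - T) = r - card T" using H fT by (simp add: card_Diff_subset)
    moreover have "H = (H - T) \<union> T" using H by blast
    ultimately show "H \<in> (\<lambda>B. B \<union> T) ` {B. B \<subseteq> {1..n} - T \<and> card B = r - card T}"
      using H by blast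
  next
    fix H assume "H \<in> (\<lambda>B. B \<union> T) ` {B. B \<subseteq> {1..n} - T \<and> card B = r - card T}"
    then obtain B where B: "B \<subseteq> {1..n} - T" "card B = r - card T" and HB: "H = B \<union> T" by blast
    have fB: "finite B" using B(1) finite_subset by blast
    have "card H = card B + card T" unfolding HB using B(1) fB fT by (subst card_Un_disjoint) auto
    then show "H \<in> {H. H \<subseteq> {1..n} \<and> card H = r \<and> T \<subseteq> H}" using HB B tr T by auto
  qed
  have inj: "inj_on (\<lambda>B. B \<union> T) {B. B \<subseteq> {1..n} - T \<and> card B = r - card T}"
    by (rule inj_onI) blast
  have "card {B. B \<subseteq> {1..n} - T \<and> card B = r - card T} = card ({1..n} - T) choose (r - card T)"
    by (rule n_subsets) simp
  also have "card ({1..n} - T) = n - card T" using T fT by (simp add: card_Diff_subset)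
  finally show ?thesis using eq inj by (simp add: card_image)
qed

lemma prob_supset:
  assumes T: "T \<subseteq> {1..n}" and rn: "r \<le> n"
  shows "measure (measure_pmf (round_pmf n r)) {H. T \<subseteq> H} = real (r choose card T) / real (n choose card T)"
proof -
  let ?S = "{H. H \<subseteq> {1..n} \<and> card H = r}"
  have fS: "finite ?S" by simp
  have cS: "card ?S = n choose r" using n_subsets[of "{1..n}" r] by simp
  have ne: "?S \<noteq> {}" using cS rn by (metis card.empty zero_less_binomial_iff less_irrefl_nat) 
  have m: "measure (measure_pmf (round_pmf n r)) {H. T \<subseteq> H} = card (?S \<inter> {H. T \<subseteq> H}) / card ?S"
    unfolding round_pmf_def by (rule measure_pmf_of_set[OF ne fS])
  have eqS: "?S \<inter> {H. T \<subseteq> H} = {H. H \<subseteq> {1..n} \<and> card H = r \<and> T \<subseteq> H}" by blast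
  have fT: "finite T" using T finite_subset by blast
  have tn: "card T \<le> n" using card_mono[OF _ T] by simp
  show ?thesis
  proof (cases "card T \<le> r")
    case True
    have "real (n choose r) * real (r choose card T) = real (n choose card T) * real ((n - card T) choose (r - card T))"
      using choose_mult[OF True rn] by (metis of_nat_mult)
    moreover have "n choose r > 0" "n choose card T > 0" using rn tn by auto
    moreover have "real (n choose r) * measure (measure_pmf (round_pmf n r)) {H. T \<subseteq> H} = real ((n - card T) choose (r - card T))"
      using m eqS cS card_supsets[OF T True] \<open>n choose r > 0\<close> by simp
    ultimately have "real (n choose r) * (real (n choose card T) * measure (measure_pmf (round_pmf n r)) {H. T \<subseteq> H}) = real (n choose r) * real (r choose card T)"
      by (metis mult.left_commute)
    then have "real (n choose card T) * measure (measure_pmf (round_pmf n r)) {H. T \<subseteq> H} = real (r choose card T)"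
      using \<open>n choose r > 0\<close> by simp
    then show ?thesis using \<open>n choose card T > 0\<close> by (simp add: field_simps)
  next
    case False
    have "{H. H \<subseteq> {1..n} \<and> card H = r \<and> T \<subseteq> H} = {}"
    proof (rule ccontr)
      assume "{H. H \<subseteq> {1..n} \<and> card H = r \<and> T \<subseteq> H} \<noteq> {}"
      then obtain H where "H \<subseteq> {1..n}" "card H = r" "T \<subseteq> H" by blast
      then have "card T \<le> r" using card_mono[of H T] finite_subset[of H "{1..n}"] by auto
      then show False using False by simp
    qed
    then have "measure (measure_pmf (round_pmf n r)) {H. T \<subseteq> H} = 0" using m eqS by simp
    then show ?thesis using False by simp
  qed
qed



lemma second_moment:
  fixes M :: "'a measure" and E :: "'i \<Rightarrow> 'a set"
  assumes P: "prob_space M" and fI: "finite I" and EM: "\<And>i. i \<in> I \<Longrightarrow> E i \<in> sets M"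
    and mu: "\<mu> = (\<Sum>i\<in>I. measure M (E i))" and mupos: "\<mu> > 0"
  shows "measure M (space M - (\<Union>i\<in>I. E i)) \<le> (\<Sum>i\<in>I. \<Sum>j\<in>I. measure M (E i \<inter> E j)) / \<mu>^2 - 1"
proof -
  interpret prob_space M by (rule P)
  define X where "X \<omega> = (\<Sum>i\<in>I. indicator (E i) \<omega> :: real)" for \<omega>
  let ?Z = "space M - (\<Union>i\<in>I. E i)"
  have Zs: "?Z \<in> sets M" using EM fI by auto
  have intE: "\<And>i. i \<in> I \<Longrightarrow> integrable M (indicator (E i) :: 'a \<Rightarrow> real)"
    using EM by (simp add: emeasure_eq_measure)
  have intEE: "\<And>i j. i \<in> I \<Longrightarrow> j \<in> I \<Longrightarrow> integrable M (indicator (E i \<inter> E j) :: 'a \<Rightarrow> real)"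
    using EM by (simp add: emeasure_eq_measure sets.Int)
  define F where "F \<omega> = (\<Sum>i\<in>I. \<Sum>j\<in>I. indicator (E i \<inter> E j) \<omega>) - 2 * \<mu> * X \<omega> + \<mu>^2" for \<omega>
  have sq: "(X \<omega> - \<mu>)^2 = F \<omega>" for \<omega>
  proof -
    have "X \<omega> * X \<omega> = (\<Sum>i\<in>I. \<Sum>j\<in>I. indicator (E i \<inter> E j) \<omega>)"
      unfolding X_def sum_product by (simp add: indicator_inter_arith)
    then show ?thesis unfolding F_def by (simp add: power2_eq_square algebra_simps)
  qed
  have intX: "integrable M X" unfolding X_def using intE by auto
  have intF: "integrable M F" unfolding F_def using intX intEE by auto
  have "measure M ?Z = integral\<^sup>L M (indicator ?Z)"
    using Zs by simp
  also have "\<dots> \<le> integral\<^sup>L M (\<lambda>\<omega>. F \<omega> / \<mu>^2)"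
  proof (rule integral_mono)
    show "integrable M (indicator ?Z :: 'a \<Rightarrow> real)" using Zs by (simp add: emeasure_eq_measure)
    show "integrable M (\<lambda>\<omega>. F \<omega> / \<mu>^2)" using intF by auto
    fix \<omega> assume "\<omega> \<in> space M"
    show "indicator ?Z \<omega> \<le> F \<omega> / \<mu>^2"
    proof (cases "\<omega> \<in> ?Z")
      case True
      then have "X \<omega> = 0" unfolding X_def by (auto intro!: sum.neutral simp: indicator_def)
      then have "F \<omega> = \<mu>^2" using sq[of \<omega>] by simp
      then show ?thesis using True mupos by simp
    next
      case False
      have "0 \<le> F \<omega> / \<mu>^2" using sq[of \<omega>, symmetric] by simp
      then show ?thesis using False by simp
    qed
  qed
  also have "integral\<^sup>L M (\<lambda>\<omega>. F \<omega> / \<mu>^2) = integral\<^sup>L M F / \<mu>^2" by simp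
  also have "integral\<^sup>L M F = (\<Sum>i\<in>I. \<Sum>j\<in>I. measure M (E i \<inter> E j)) - 2 * \<mu> * \<mu> + \<mu>^2"
  proof -
    have iX: "integral\<^sup>L M X = \<mu>" unfolding X_def mu using intE EM
      by (simp add: integral_sum Int_absorb2 sets.sets_into_space)
    have iXX: "integral\<^sup>L M (\<lambda>\<omega>. \<Sum>i\<in>I. \<Sum>j\<in>I. indicator (E i \<inter> E j) \<omega> :: real) = (\<Sum>i\<in>I. \<Sum>j\<in>I. measure M (E i \<inter> E j))"
      using intEE EM by (simp add: integral_sum Int_absorb2 sets.sets_into_space le_infI1)
    have "integral\<^sup>L M F = integral\<^sup>L M (\<lambda>\<omega>. \<Sum>i\<in>I. \<Sum>j\<in>I. indicator (E i \<inter> E j) \<omega> :: real) - integral\<^sup>L M (\<lambda>\<omega>. 2 * \<mu> * X \<omega>) + integral\<^sup>L M (\<lambda>\<omega>. \<mu>^2)"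
    proof -
      have i1: "integrable M (\<lambda>\<omega>. \<Sum>i\<in>I. \<Sum>j\<in>I. indicator (E i \<inter> E j) \<omega> :: real)" using intEE by auto
      have i2: "integrable M (\<lambda>\<omega>. 2 * \<mu> * X \<omega>)" using intX by auto
      have i3: "integrable M (\<lambda>\<omega>. \<mu>^2)" by simp
      show ?thesis unfolding F_def
        by (subst Bochner_Integration.integral_add[OF Bochner_Integration.integrable_diff[OF i1 i2] i3]) (simp only: Bochner_Integration.integral_diff[OF i1 i2])
    qed
    then show ?thesis using iX iXX by (simp add: prob_space)
  qed
  finally show ?thesis using mupos by (simp add: power2_eq_square field_simps)
qed



definition g :: "nat \<Rightarrow> nat \<Rightarrow> nat \<Rightarrow> real" where
  "g n r t = real (r choose t) / real (n choose t)"

lemma choose_step: "(m choose Suc t) * Suc t = (m choose t) * (m - t)"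
proof (cases m)
  case 0 then show ?thesis by simp
next
  case (Suc m')
  have "(m - t) * (m choose t) = m * ((m - 1) choose t)" by (rule binomial_absorb_comp)
  moreover have "Suc m' * (m' choose t) = (Suc m' choose Suc t) * Suc t" by (rule Suc_times_binomial_eq)
  ultimately show ?thesis using Suc by (simp add: mult.commute)
qed

lemma g_step:
  assumes "t < n"
  shows "g n r (Suc t) = g n r t * (real (r - t) / real (n - t))"
proof -
  have a: "real (r choose Suc t) * real (Suc t) = real (r choose t) * real (r - t)"
    using choose_step[of r t] by (metis of_nat_mult)
  have b: "real (n choose Suc t) * real (Suc t) = real (n choose t) * real (n - t)"
    using choose_step[of n t] by (metis of_nat_mult)
  have pos: "real (n choose t) > 0" "real (n - t) > 0" using assms by auto
  have "g n r (Suc t) = (real (r choose Suc t) * real (Suc t)) / (real (n choose Suc t) * real (Suc t))"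
    unfolding g_def by simp
  also have "\<dots> = (real (r choose t) * real (r - t)) / (real (n choose t) * real (n - t))"
    using a b by simp
  finally show ?thesis unfolding g_def by simp
qed

lemma g_nonneg: "g n r t \<ge> 0" unfolding g_def by simp

lemma h_le1: "r \<le> n \<Longrightarrow> real (r - t) / real (n - t) \<le> 1"
  by (cases "n - t = 0") (auto simp: divide_le_eq_1)

lemma g_Suc_le: "r \<le> n \<Longrightarrow> t < n \<Longrightarrow> g n r (Suc t) \<le> g n r t"
proof -
  assume a: "r \<le> n" "t < n"
  have "g n r t * (real (r - t) / real (n - t)) \<le> g n r t * 1"
    by (rule mult_left_mono[OF h_le1[OF a(1)] g_nonneg])
  then show ?thesis using g_step[OF a(2), of r] by simp
qed

lemma g_antimono: "r \<le> n \<Longrightarrow> t1 \<le> t2 \<Longrightarrow> t2 \<le> n \<Longrightarrow> g n r t2 \<le> g n r t1"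
proof (induction t2)
  case 0 then show ?case by simp
next
  case (Suc t2)
  show ?case
  proof (cases "t1 = Suc t2")
    case True then show ?thesis by simp
  next
    case False
    then have "g n r t2 \<le> g n r t1" using Suc by simp
    moreover have "g n r (Suc t2) \<le> g n r t2" using g_Suc_le Suc by simp
    ultimately show ?thesis by simp
  qed
qed

lemma h_mono:
  assumes "r \<le> n" "a + b < n"
  shows "real (r - (a + b)) / real (n - (a + b)) \<le> real (r - b) / real (n - b)"
proof (cases "r \<le> a + b")
  case True then show ?thesis by simp
next
  case False
  have p1: "real (n - (a + b)) > 0" "real (n - b) > 0" using assms by auto
  have "real (r - (a + b)) * real (n - b) \<le> real (r - b) * real (n - (a + b))"
    using False assms by (simp add: of_nat_diff algebra_simps mult_left_mono)
  then show ?thesis using p1 by (simp add: divide_simps)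
qed

lemma g_submult: "r \<le> n \<Longrightarrow> a + b \<le> n \<Longrightarrow> g n r (a + b) \<le> g n r a * g n r b"
proof (induction b)
  case 0
  have "g n r 0 = 1" unfolding g_def by simp
  then show ?case by simp
next
  case (Suc b)
  have ab: "a + b < n" using Suc by simp
  have "g n r (a + Suc b) = g n r (a + b) * (real (r - (a + b)) / real (n - (a + b)))"
    using g_step[OF ab] by simp
  also have "\<dots> \<le> (g n r a * g n r b) * (real (r - b) / real (n - b))"
    using Suc ab h_mono[OF Suc(2) ab] by (intro mult_mono) (auto simp: g_nonneg)
  also have "\<dots> = g n r a * g n r (Suc b)" using g_step[of b n r] ab by simp
  finally show ?case .
qed



definition Aset :: "nat \<Rightarrow> nat \<Rightarrow> nat set set" where
  "Aset n s = {S. S \<subseteq> {1..n} \<and> card S = s}"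

definition Ev :: "nat \<Rightarrow> nat set \<Rightarrow> nat set stream set" where
  "Ev k S = {\<omega>. \<forall>t<k. \<omega> !! t \<in> {H. \<not> S \<subseteq> H}}"

lemma finite_Aset[simp]: "finite (Aset n s)"
  unfolding Aset_def by (rule finite_subset[of _ "Pow {1..n}"]) auto

lemma card_Aset: "card (Aset n s) = n choose s"
  unfolding Aset_def using n_subsets[of "{1..n}" s] by simp

lemma rounds_prob: "prob_space (rounds n r)"
  unfolding rounds_def by (rule prob_space.prob_space_stream_space[OF prob_space_measure_pmf])

lemma space_rounds[simp]: "space (rounds n r) = UNIV"
  unfolding rounds_def by (simp add: space_stream_space)

lemma Ev_sets[measurable]: "Ev k S \<in> sets (rounds n r)"
  unfolding Ev_def rounds_def by (rule meas_allB)

lemma measure_allB_real: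
  "measure (rounds n r) {\<omega>. \<forall>t<k. \<omega> !! t \<in> B} = (measure (round_pmf n r) B)^k"
proof -
  have "emeasure (rounds n r) {\<omega>. \<forall>t<k. \<omega> !! t \<in> B} = ennreal ((measure (round_pmf n r) B)^k)"
    unfolding rounds_def emeasure_allB by (simp add: measure_pmf.emeasure_eq_measure ennreal_power)
  then show ?thesis by (simp add: measure_def)
qed

lemma prob_S:
  assumes "S \<in> Aset n s" "r \<le> n"
  shows "measure (round_pmf n r) {H. S \<subseteq> H} = g n r s"
  using prob_supset[of S n r] assms unfolding Aset_def g_def by auto

lemma prob_notS:
  assumes "S \<in> Aset n s" "r \<le> n"
  shows "measure (round_pmf n r) {H. \<not> S \<subseteq> H} = 1 - g n r s"
proof -
  have "{H. \<not> S \<subseteq> H} = space (measure_pmf (round_pmf n r)) - {H. S \<subseteq> H}" by auto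
  then show ?thesis using measure_pmf.prob_compl[of "{H. S \<subseteq> H}" "round_pmf n r"] prob_S[OF assms]
    by simp
qed

lemma prob_Ev:
  assumes "S \<in> Aset n s" "r \<le> n"
  shows "measure (rounds n r) (Ev k S) = (1 - g n r s)^k"
  unfolding Ev_def measure_allB_real prob_notS[OF assms] ..

lemma prob_pair:
  assumes "S \<in> Aset n s" "S' \<in> Aset n s" "r \<le> n"
  shows "measure (rounds n r) (Ev k S \<inter> Ev k S') = (1 - 2 * g n r s + g n r (card (S \<union> S')))^k"
proof -
  let ?P = "measure_pmf (round_pmf n r)"
  have eq: "Ev k S \<inter> Ev k S' = {\<omega>. \<forall>t<k. \<omega> !! t \<in> {H. \<not> S \<subseteq> H} \<inter> {H. \<not> S' \<subseteq> H}}"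
    unfolding Ev_def by auto
  have U: "S \<union> S' \<subseteq> {1..n}" using assms unfolding Aset_def by auto
  have pu: "measure ?P {H. S \<union> S' \<subseteq> H} = g n r (card (S \<union> S'))"
    using prob_supset[OF U assms(3)] unfolding g_def .
  have "measure ?P ({H. S \<subseteq> H} \<union> {H. S' \<subseteq> H}) = measure ?P {H. S \<subseteq> H} + measure ?P {H. S' \<subseteq> H} - measure ?P ({H. S \<subseteq> H} \<inter> {H. S' \<subseteq> H})"
    by (rule measure_Un3) (simp_all add: measure_pmf.fmeasurable_eq_sets)
  also have "{H. S \<subseteq> H} \<inter> {H. S' \<subseteq> H} = {H. S \<union> S' \<subseteq> H}" by auto
  finally have un: "measure ?P ({H. S \<subseteq> H} \<union> {H. S' \<subseteq> H}) = 2 * g n r s - g n r (card (S \<union> S'))"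
    using prob_S[OF assms(1,3)] prob_S[OF assms(2,3)] pu by simp
  have "{H. \<not> S \<subseteq> H} \<inter> {H. \<not> S' \<subseteq> H} = space ?P - ({H. S \<subseteq> H} \<union> {H. S' \<subseteq> H})" by auto
  then have "measure ?P ({H. \<not> S \<subseteq> H} \<inter> {H. \<not> S' \<subseteq> H}) = 1 - (2 * g n r s - g n r (card (S \<union> S')))"
    using measure_pmf.prob_compl[of "{H. S \<subseteq> H} \<union> {H. S' \<subseteq> H}" "round_pmf n r"] un by simp
  then have "measure ?P ({H. \<not> S \<subseteq> H} \<inter> {H. \<not> S' \<subseteq> H}) = 1 - 2 * g n r s + g n r (card (S \<union> S'))"
    by simp
  then show ?thesis unfolding eq measure_allB_real by simp
qed

lemma notAC_eq: "{\<omega>. \<not> all_collected n s \<omega> k} = (\<Union>S\<in>Aset n s. Ev k S)"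
  unfolding all_collected_def Aset_def Ev_def by auto

lemma notAC_sets[measurable]: "{\<omega>. \<not> all_collected n s \<omega> k} \<in> sets (rounds n r)"
  unfolding notAC_eq by (intro sets.finite_UN) auto



lemma AC_mono: "all_collected n s \<omega> j \<Longrightarrow> j \<le> j' \<Longrightarrow> all_collected n s \<omega> j'"
  unfolding all_collected_def using less_le_trans by blast

lemma g_le1: "r \<le> n \<Longrightarrow> g n r s \<le> 1"
proof (cases "s \<le> n")
  case True
  assume "r \<le> n"
  then have "g n r s \<le> g n r 0" using g_antimono[of r n 0 s] True by simp
  then show ?thesis by (simp add: g_def)
next
  case False
  then have z: "real (n choose s) = 0" by simp
  show ?thesis unfolding g_def z by simp
qed

lemma prob_notAC:
  assumes "r \<le> n"
  shows "emeasure (rounds n r) {\<omega>. \<not> all_collected n s \<omega> j} \<le> ennreal (real (n choose s) * (1 - g n r s)^j)"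
proof -
  have "emeasure (rounds n r) {\<omega>. \<not> all_collected n s \<omega> j} \<le> (\<Sum>S\<in>Aset n s. emeasure (rounds n r) (Ev j S))"
    unfolding notAC_eq by (rule emeasure_subadditive_finite) auto
  also have "\<dots> = (\<Sum>S\<in>Aset n s. ennreal ((1 - g n r s)^j))"
  proof (rule sum.cong)
    fix S assume S: "S \<in> Aset n s"
    interpret prob_space "rounds n r" by (rule rounds_prob)
    show "emeasure (rounds n r) (Ev j S) = ennreal ((1 - g n r s)^j)"
      using prob_Ev[OF S assms] by (simp add: emeasure_eq_measure)
  qed simp
  also have "\<dots> = ennreal (real (n choose s) * (1 - g n r s)^j)"
    using card_Aset[of n s] g_le1[OF assms, of s] by (simp add: ennreal_of_nat_eq_real_of_nat ennreal_mult)
  finally show ?thesis .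
qed

lemma T_upper_pw:
  "ennreal (real (T_time n s \<omega>)) \<le> of_nat K + (\<Sum>j. indicator {\<omega>. \<not> all_collected n s \<omega> (K + j)} \<omega>)"
proof (cases "T_time n s \<omega> \<le> K")
  case True then show ?thesis
    by (metis add_increasing2 ennreal_of_nat_eq_real_of_nat of_nat_mono zero_le)
next
  case False
  let ?T = "T_time n s \<omega>"
  have nac: "\<not> all_collected n s \<omega> (K + j)" if "j < ?T - K" for j
  proof -
    have "K + j < ?T" using that False by simp
    then show ?thesis unfolding T_time_def using not_less_Least by blast
  qed
  have "of_nat (?T - K) = (\<Sum>j<?T - K. indicator {\<omega>. \<not> all_collected n s \<omega> (K + j)} \<omega> :: ennreal)"
    using nac by simp
  also have "\<dots> \<le> (\<Sum>j. indicator {\<omega>. \<not> all_collected n s \<omega> (K + j)} \<omega>)"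
    by (rule sum_le_suminf) auto
  finally have "of_nat K + of_nat (?T - K) \<le> of_nat K + (\<Sum>j. indicator {\<omega>. \<not> all_collected n s \<omega> (K + j)} \<omega> :: ennreal)"
    by (rule add_left_mono)
  moreover have "ennreal (real ?T) = of_nat K + of_nat (?T - K)"
    using False by (simp add: ennreal_of_nat_eq_real_of_nat[symmetric] of_nat_add[symmetric] del: of_nat_add)
  ultimately show ?thesis by simp
qed

lemma upper:
  assumes rn: "r \<le> n" and p0: "g n r s > 0" and p1: "g n r s \<le> 1"
  shows "expected_T n r s \<le> ennreal (real K + real (n choose s) * (1 - g n r s)^K / g n r s)"
proof -
  interpret P: prob_space "rounds n r" by (rule rounds_prob)
  let ?p = "g n r s" and ?N = "real (n choose s)"
  have "expected_T n r s \<le> (\<integral>\<^sup>+\<omega>. of_nat K + (\<Sum>j. indicator {\<omega>. \<not> all_collected n s \<omega> (K + j)} \<omega>) \<partial>rounds n r)"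
    unfolding expected_T_def by (rule nn_integral_mono) (rule T_upper_pw)
  also have "\<dots> = of_nat K + (\<Sum>j. emeasure (rounds n r) {\<omega>. \<not> all_collected n s \<omega> (K + j)})"
  proof -
    have e1: "emeasure (rounds n r) UNIV = 1" using P.emeasure_space_1 by simp
    show ?thesis by (subst nn_integral_add) (auto simp: nn_integral_suminf e1)
  qed
  also have "\<dots> \<le> of_nat K + (\<Sum>j. ennreal (?N * (1 - ?p)^(K + j)))"
    by (intro add_left_mono suminf_le prob_notAC[OF rn]) auto
  also have "(\<Sum>j. ennreal (?N * (1 - ?p)^(K + j))) = ennreal (\<Sum>j. ?N * (1 - ?p)^(K + j))"
    using p0 p1 by (intro suminf_ennreal2) (auto simp: power_add intro!: summable_mult)
  also have "(\<Sum>j. ?N * (1 - ?p)^(K + j)) = ?N * (1 - ?p)^K * (\<Sum>j. (1 - ?p)^j)"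
    using p0 p1 by (simp add: power_add suminf_mult[symmetric] mult.assoc)
  also have "(\<Sum>j. (1 - ?p)^j) = 1 / ?p"
    using p0 p1 by (subst suminf_geometric) auto
  finally show ?thesis
    using p0 p1 by (simp add: ennreal_of_nat_eq_real_of_nat ennreal_plus[symmetric] del: ennreal_plus)
qed



lemma lower1:
  assumes rn: "r \<le> n" and p0: "g n r s > 0"
  shows "real k * (1 - measure (rounds n r) (UNIV - (\<Union>S\<in>Aset n s. Ev k S))) \<le> enn2real (expected_T n r s)"
proof -
  interpret P: prob_space "rounds n r" by (rule rounds_prob)
  let ?p = "g n r s" and ?N = "real (n choose s)"
  have p1: "?p \<le> 1" using g_le1[OF rn] .
  define Nv where "Nv = (\<Inter>j. {\<omega>. \<not> all_collected n s \<omega> j})"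
  have Nv_sets: "Nv \<in> sets (rounds n r)" unfolding Nv_def by (intro sets.countable_INT) auto
  have "measure (rounds n r) Nv \<le> ?N * (1 - ?p)^j" for j
  proof -
    have "emeasure (rounds n r) Nv \<le> emeasure (rounds n r) {\<omega>. \<not> all_collected n s \<omega> j}"
      by (rule emeasure_mono) (auto simp: Nv_def)
    also have "\<dots> \<le> ennreal (?N * (1 - ?p)^j)" by (rule prob_notAC[OF rn])
    finally show ?thesis using p1 by (simp add: P.emeasure_eq_measure)
  qed
  moreover have "(\<lambda>j. ?N * (1 - ?p)^j) \<longlonglongrightarrow> ?N * 0"
    using p0 p1 by (intro tendsto_mult tendsto_const LIMSEQ_power_zero) auto
  ultimately have "measure (rounds n r) Nv \<le> 0"
    by (intro LIMSEQ_le_const[of "\<lambda>j. ?N * (1 - ?p)^j"]) auto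
  then have "emeasure (rounds n r) Nv = 0"
    by (simp add: P.emeasure_eq_measure measure_nonneg antisym)
  then have null: "Nv \<in> null_sets (rounds n r)" using Nv_sets by auto
  have AE: "AE \<omega> in rounds n r. \<exists>j. all_collected n s \<omega> j"
    by (rule AE_I'[OF null]) (auto simp: Nv_def)
  have "(\<integral>\<^sup>+\<omega>. of_nat k * indicator {\<omega>. \<not> all_collected n s \<omega> k} \<omega> \<partial>rounds n r) \<le> expected_T n r s"
    unfolding expected_T_def
  proof (rule nn_integral_mono_AE)
    show "AE \<omega> in rounds n r. of_nat k * indicator {\<omega>. \<not> all_collected n s \<omega> k} \<omega> \<le> ennreal (real (T_time n s \<omega>))"
      using AE
    proof eventually_elim
      case (elim \<omega>)
      show ?case
      proof (cases "all_collected n s \<omega> k")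
        case True then show ?thesis by simp
      next
        case False
        have "all_collected n s \<omega> (T_time n s \<omega>)" unfolding T_time_def using elim by (metis LeastI)
        then have "k < T_time n s \<omega>" using False AC_mono by (metis not_less)
        then show ?thesis using False
          by (simp add: ennreal_of_nat_eq_real_of_nat)
      qed
    qed
  qed
  moreover have "(\<integral>\<^sup>+\<omega>. of_nat k * indicator {\<omega>. \<not> all_collected n s \<omega> k} \<omega> \<partial>rounds n r)
      = ennreal (real k * (1 - measure (rounds n r) (UNIV - (\<Union>S\<in>Aset n s. Ev k S))))"
  proof -
    have "measure (rounds n r) {\<omega>. \<not> all_collected n s \<omega> k} = 1 - measure (rounds n r) (UNIV - (\<Union>S\<in>Aset n s. Ev k S))"
    proof -
      have U: "(\<Union>S\<in>Aset n s. Ev k S) \<in> sets (rounds n r)" by (intro sets.finite_UN) auto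
      have "UNIV - (\<Union>S\<in>Aset n s. Ev k S) \<in> sets (rounds n r)"
        using sets.Diff[OF sets.top U] by simp
      then show ?thesis
        using P.prob_compl[of "UNIV - (\<Union>S\<in>Aset n s. Ev k S)"] unfolding notAC_eq
        by (simp add: double_diff)
    qed
    then show ?thesis
      by (simp add: nn_integral_cmult_indicator P.emeasure_eq_measure ennreal_of_nat_eq_real_of_nat ennreal_mult)
  qed
  moreover have "expected_T n r s < \<top>"
    using upper[OF rn p0 p1, of 0] by (simp add: top.not_eq_extremum order_le_less_trans)
  ultimately have "ennreal (real k * (1 - measure (rounds n r) (UNIV - (\<Union>S\<in>Aset n s. Ev k S)))) \<le> expected_T n r s"
    by simp
  then show ?thesis using \<open>expected_T n r s < \<top>\<close>
    by (metis P.prob_le_1 diff_ge_0_iff_ge enn2real_ennreal enn2real_mono of_nat_0_le_iff zero_le_mult_iff)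
qed



definition Meet :: "nat \<Rightarrow> nat \<Rightarrow> nat set \<Rightarrow> nat set set" where
  "Meet n s S = {S' \<in> Aset n s. S' \<noteq> S \<and> S \<inter> S' \<noteq> {}}"

lemma base_nonneg:
  assumes "S \<in> Aset n s" "S' \<in> Aset n s" "r \<le> n"
  shows "0 \<le> 1 - 2 * g n r s + g n r (card (S \<union> S'))"
  using prob_pair[OF assms, of 1] measure_nonneg[of "rounds n r" "Ev 1 S \<inter> Ev 1 S'"] by simp

lemma pair_bound:
  assumes rn: "r \<le> n" and s2: "2 * s \<le> n" and S: "S \<in> Aset n s" and S': "S' \<in> Aset n s"
  shows "measure (rounds n r) (Ev k S \<inter> Ev k S') \<le> (1 - g n r s)^(2*k) + (if S' = S then (1 - g n r s)^k else 0)
           + (if S' \<in> Meet n s S then (1 - 2 * g n r s + g n r (Suc s))^k else 0)"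
proof -
  let ?p = "g n r s"
  have fS: "finite S" "finite S'" "card S = s" "card S' = s" "S \<subseteq> {1..n}" "S' \<subseteq> {1..n}"
    using S S' unfolding Aset_def by (auto intro: finite_subset)
  have b0: "0 \<le> 1 - 2 * ?p + g n r (card (S \<union> S'))" by (rule base_nonneg[OF S S' rn])
  have nn: "0 \<le> (1 - ?p)^(2*k)" "0 \<le> (1 - ?p)^k" using g_le1[OF rn, of s] by simp_all
  have pp: "measure (rounds n r) (Ev k S \<inter> Ev k S') = (1 - 2 * ?p + g n r (card (S \<union> S')))^k"
    by (rule prob_pair[OF S S' rn])
  consider "S' = S" | "S' \<noteq> S" "S \<inter> S' = {}" | "S' \<in> Meet n s S"
    using S' unfolding Meet_def by blast
  then show ?thesis
  proof cases
    case 1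
    moreover have "S \<notin> Meet n s S" unfolding Meet_def by blast
    ultimately show ?thesis using prob_Ev[OF S rn, of k] nn by simp
  next
    case 2
    then have nm: "S' \<notin> Meet n s S" unfolding Meet_def by blast
    have c: "card (S \<union> S') = s + s" using 2 fS by (simp add: card_Un_disjoint)
    have "g n r (s + s) \<le> ?p * ?p" using g_submult[OF rn, of s s] s2 by simp
    then have "1 - 2 * ?p + g n r (card (S \<union> S')) \<le> (1 - ?p)^2" unfolding c by (simp add: power2_eq_square algebra_simps)
    then have "(1 - 2 * ?p + g n r (card (S \<union> S')))^k \<le> ((1 - ?p)^2)^k" using b0 by (intro power_mono)
    then show ?thesis using pp 2 nm by (simp add: power_mult)
  next
    case 3
    then have ne: "S' \<noteq> S" unfolding Meet_def by blast
    have "card (S \<union> S') \<ge> Suc s"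
    proof (rule ccontr)
      assume "\<not> card (S \<union> S') \<ge> Suc s"
      then have "card (S \<union> S') \<le> card S" using fS by simp
      then have "S = S \<union> S'" using card_subset_eq[of "S \<union> S'" S] fS
        by (metis Un_upper1 card_mono finite_Un le_antisym)
      then have "S' \<subseteq> S" by blast
      then have "S' = S" using card_subset_eq[of S S'] fS by simp
      then show False using ne by simp
    qed
    moreover have "card (S \<union> S') \<le> n" using card_mono[of "{1..n}" "S \<union> S'"] fS by simp
    ultimately have "g n r (card (S \<union> S')) \<le> g n r (Suc s)" using g_antimono[OF rn] by simp
    then have "(1 - 2 * ?p + g n r (card (S \<union> S')))^k \<le> (1 - 2 * ?p + g n r (Suc s))^k"
      using b0 by (intro power_mono) simp_all
    then show ?thesis using pp 3 ne nn(1) by (simp add: add_increasing)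
  qed
qed

lemma card_Meet:
  assumes S: "S \<in> Aset n s" and s1: "1 \<le> s"
  shows "real (card (Meet n s S)) \<le> real s * real s * real (n choose s) / real n"
proof -
  have fS: "finite S" "card S = s" "S \<subseteq> {1..n}" using S unfolding Aset_def by (auto intro: finite_subset)
  have sub: "Meet n s S \<subseteq> (\<Union>x\<in>S. {S'. S' \<subseteq> {1..n} \<and> card S' = s \<and> {x} \<subseteq> S'})"
    unfolding Meet_def Aset_def by blast
  have fin: "finite (\<Union>x\<in>S. {S'. S' \<subseteq> {1..n} \<and> card S' = s \<and> {x} \<subseteq> S'})"
    using fS(1) by (auto intro: finite_subset[of _ "Pow {1..n}"])
  have "card (Meet n s S) \<le> card (\<Union>x\<in>S. {S'. S' \<subseteq> {1..n} \<and> card S' = s \<and> {x} \<subseteq> S'})"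
    by (rule card_mono[OF fin sub])
  also have "\<dots> \<le> (\<Sum>x\<in>S. card {S'. S' \<subseteq> {1..n} \<and> card S' = s \<and> {x} \<subseteq> S'})"
    by (rule card_UN_le[OF fS(1)])
  also have "\<dots> = (\<Sum>x\<in>S. (n - 1) choose (s - 1))"
  proof (rule sum.cong)
    fix x assume "x \<in> S"
    then have "{x} \<subseteq> {1..n}" using fS by auto
    then show "card {S'. S' \<subseteq> {1..n} \<and> card S' = s \<and> {x} \<subseteq> S'} = (n - 1) choose (s - 1)"
      using card_supsets[of "{x}" n s] s1 by simp
  qed simp
  also have "\<dots> = s * ((n - 1) choose (s - 1))" using fS by simp
  finally have c: "real (card (Meet n s S)) \<le> real s * real ((n - 1) choose (s - 1))"
    by (metis of_nat_le_iff of_nat_mult)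
  have "s * (n choose s) = n * ((n - 1) choose (s - 1))" using s1 by (intro times_binomial_minus1_eq) simp
  then have e: "real s * real (n choose s) = real n * real ((n - 1) choose (s - 1))" by (metis of_nat_mult)
  show ?thesis
  proof (cases "n = 0")
    case True
    then have "Meet n s S = {}" using fS s1 by (auto simp: Meet_def)
    then show ?thesis by simp
  next
    case False
    then have "real ((n - 1) choose (s - 1)) = real s * real (n choose s) / real n" using e by (simp add: field_simps)
    then show ?thesis using c by simp
  qed
qed

lemma sum_pair_bound:
  assumes rn: "r \<le> n" and s2: "2 * s \<le> n" and s1: "1 \<le> s" and S: "S \<in> Aset n s"
    and ph: "g n r s \<le> 1/2"
  shows "(\<Sum>S'\<in>Aset n s. measure (rounds n r) (Ev k S \<inter> Ev k S')) \<le>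
     real (n choose s) * (1 - g n r s)^(2*k) + (1 - g n r s)^k
     + real s * real s * real (n choose s) / real n * (1 - 2 * g n r s + g n r (Suc s))^k"
proof -
  let ?w = "(1 - 2 * g n r s + g n r (Suc s))^k"
  have w0: "0 \<le> ?w" using ph g_nonneg[of n r "Suc s"] by simp
  have "(\<Sum>S'\<in>Aset n s. measure (rounds n r) (Ev k S \<inter> Ev k S')) \<le>
      (\<Sum>S'\<in>Aset n s. (1 - g n r s)^(2*k) + (if S' = S then (1 - g n r s)^k else 0)
           + (if S' \<in> Meet n s S then ?w else 0))"
    by (intro sum_mono pair_bound[OF rn s2 S]) simp
  also have "\<dots> = real (n choose s) * (1 - g n r s)^(2*k) + (1 - g n r s)^k + real (card (Meet n s S)) * ?w"
  proof -
    have m: "Aset n s \<inter> Meet n s S = Meet n s S" unfolding Meet_def by blast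
    have "(\<Sum>S'\<in>Aset n s. (if S' \<in> Meet n s S then ?w else 0)) = (\<Sum>S'\<in>Meet n s S. ?w)"
      using sum.inter_restrict[of "Aset n s" "\<lambda>_. ?w" "Meet n s S"] m by simp
    then show ?thesis using S by (simp add: sum.distrib card_Aset)
  qed
  also have "\<dots> \<le> real (n choose s) * (1 - g n r s)^(2*k) + (1 - g n r s)^k
     + real s * real s * real (n choose s) / real n * ?w"
    using card_Meet[OF S s1] w0 by (intro add_left_mono mult_right_mono) auto
  finally show ?thesis .
qed



lemma AC_bound:
  assumes rn: "r \<le> n" and s2: "2 * s \<le> n" and s1: "1 \<le> s" and p0: "g n r s > 0" and ph: "g n r s \<le> 1/2"
  shows "measure (rounds n r) (UNIV - (\<Union>S\<in>Aset n s. Ev k S)) \<le>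
    1 / (real (n choose s) * (1 - g n r s)^k)
    + real s * real s / real n * ((1 - 2 * g n r s + g n r (Suc s)) / (1 - g n r s)^2)^k"
proof -
  let ?p = "g n r s" and ?N = "real (n choose s)"
  define a where "a = (1 - ?p)^k"
  define B where "B = real s * real s * ?N / real n * (1 - 2 * ?p + g n r (Suc s))^k"
  have a0: "a > 0" unfolding a_def using ph by simp
  have N0: "?N > 0" using s2 by simp
  have mu: "(\<Sum>S\<in>Aset n s. measure (rounds n r) (Ev k S)) = ?N * a"
    using prob_Ev[OF _ rn] card_Aset[of n s] unfolding a_def by simp
  have mu0: "?N * a > 0" using a0 N0 by simp
  have sm: "measure (rounds n r) (space (rounds n r) - (\<Union>S\<in>Aset n s. Ev k S)) \<le>
      (\<Sum>S\<in>Aset n s. \<Sum>S'\<in>Aset n s. measure (rounds n r) (Ev k S \<inter> Ev k S')) / (?N * a)^2 - 1"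
    by (rule second_moment[OF rounds_prob finite_Aset Ev_sets mu[symmetric] mu0])
  have "(\<Sum>S\<in>Aset n s. \<Sum>S'\<in>Aset n s. measure (rounds n r) (Ev k S \<inter> Ev k S')) \<le>
      (\<Sum>S\<in>Aset n s. ?N * a^2 + a + B)"
  proof (intro sum_mono)
    fix S assume S: "S \<in> Aset n s"
    have eq: "((1 - ?p)^k)^2 = (1 - ?p)^(2*k)" by (simp add: power_mult[symmetric] mult.commute)
    show "(\<Sum>S'\<in>Aset n s. measure (rounds n r) (Ev k S \<inter> Ev k S')) \<le> ?N * a^2 + a + B"
      using sum_pair_bound[OF rn s2 s1 S ph, of k] unfolding a_def B_def eq .
  qed
  also have "\<dots> = ?N * (?N * a^2 + a + B)" using card_Aset[of n s] by simp
  finally have ss: "(\<Sum>S\<in>Aset n s. \<Sum>S'\<in>Aset n s. measure (rounds n r) (Ev k S \<inter> Ev k S')) / (?N * a)^2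
     \<le> ?N * (?N * a^2 + a + B) / (?N * a)^2"
    by (rule divide_right_mono[OF _ zero_le_power2])
  have "?N * (?N * a^2 + a + B) / (?N * a)^2 - 1 = 1 / (?N * a) + B / (?N * a^2)"
    using a0 N0 by (simp add: field_simps power2_eq_square)
  also have "B / (?N * a^2) = real s * real s / real n * ((1 - 2 * ?p + g n r (Suc s)) / (1 - ?p)^2)^k"
  proof -
    have e1: "((1 - ?p)^k)^2 = ((1 - ?p)^2)^k" by (simp add: power_mult[symmetric] mult.commute)
    have e2: "(1 - 2 * ?p + g n r (Suc s))^k / ((1 - ?p)^2)^k = ((1 - 2 * ?p + g n r (Suc s)) / (1 - ?p)^2)^k"
      by (simp add: power_divide)
    have "B / (?N * a^2) = real s * real s / real n * ((1 - 2 * ?p + g n r (Suc s))^k / ((1 - ?p)^k)^2)"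
      unfolding B_def a_def using N0 by simp
    then show ?thesis unfolding e1 e2 .
  qed
  finally show ?thesis using sm ss unfolding a_def by simp
qed

lemma lower2:
  assumes rn: "r \<le> n" and s2: "2 * s \<le> n" and s1: "1 \<le> s" and p0: "g n r s > 0" and ph: "g n r s \<le> 1/2"
  shows "real k * (1 - 1 / (real (n choose s) * (1 - g n r s)^k)
    - real s * real s / real n * ((1 - 2 * g n r s + g n r (Suc s)) / (1 - g n r s)^2)^k)
    \<le> enn2real (expected_T n r s)"
proof -
  have "real k * (1 - 1 / (real (n choose s) * (1 - g n r s)^k)
    - real s * real s / real n * ((1 - 2 * g n r s + g n r (Suc s)) / (1 - g n r s)^2)^k)
    \<le> real k * (1 - measure (rounds n r) (UNIV - (\<Union>S\<in>Aset n s. Ev k S)))"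
    using AC_bound[OF rn s2 s1 p0 ph, of k] by (intro mult_left_mono) auto
  also have "\<dots> \<le> enn2real (expected_T n r s)" by (rule lower1[OF rn p0])
  finally show ?thesis .
qed



lemma N_ge: assumes "1 \<le> s" "s \<le> n" shows "real n / real s \<le> real (n choose s)"
proof -
  have x1: "1 \<le> real n / real s" using assms by simp
  have "real n / real s = (real n / real s)^1" by simp
  also have "\<dots> \<le> (real n / real s)^s" using x1 assms by (intro power_increasing) auto
  also have "\<dots> \<le> real (n choose s)" using binomial_ge_n_over_k_pow_k[of s n] assms by simp
  finally show ?thesis .
qed

lemma N_top: assumes "1 \<le> s" shows "filterlim (\<lambda>n. real (n choose s)) at_top sequentially"
proof (rule filterlim_at_top_mono)
  show "filterlim (\<lambda>n. real n / real s) at_top sequentially" using assms by real_asymp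
  show "\<forall>\<^sub>F n in sequentially. real n / real s \<le> real (n choose s)"
    using eventually_ge_at_top[of s] by eventually_elim (use N_ge assms in auto)
qed

lemma lnN_top: assumes "1 \<le> s" shows "filterlim (\<lambda>n. ln (real (n choose s))) at_top sequentially"
proof (rule filterlim_at_top_mono)
  show "filterlim (\<lambda>n. ln (real n / real s)) at_top sequentially" using assms by real_asymp
  show "\<forall>\<^sub>F n in sequentially. ln (real n / real s) \<le> ln (real (n choose s))"
    using eventually_ge_at_top[of s] by eventually_elim (use N_ge assms in auto)
qed

lemma p_zero: assumes "1 \<le> s" shows "(\<lambda>n. g n r s) \<longlonglongrightarrow> 0"
  unfolding g_def by (intro tendsto_divide_0[OF tendsto_const] filterlim_at_top_imp_at_infinity N_top assms)

lemma upper_ratio: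
  assumes rn: "r \<le> n" and p0: "g n r s > 0" and p1: "g n r s \<le> 1" and l0: "ln (real (n choose s)) > 0"
  shows "enn2real (expected_T n r s) / (real (n choose s) * ln (real (n choose s)) / real (r choose s))
          \<le> 1 + 2 / ln (real (n choose s))"
proof -
  let ?p = "g n r s" and ?N = "real (n choose s)" and ?l = "ln (real (n choose s))"
  define K where "K = nat \<lceil>?l / ?p\<rceil>"
  have N0: "?N > 0" using l0 by (cases "n choose s = 0") auto
  have K1: "?l / ?p \<le> real K" unfolding K_def by (rule real_nat_ceiling_ge)
  have x0: "0 \<le> ?l / ?p" using l0 p0 by simp
  have "real K = of_int \<lceil>?l / ?p\<rceil>" unfolding K_def using x0 by simp
  then have K2: "real K \<le> ?l / ?p + 1" using of_int_ceiling_le_add_one[of "?l / ?p"] by linarith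
  have "(1 - ?p)^K \<le> exp (- ?p)^K"
    using p1 exp_ge_add_one_self[of "- ?p"] by (intro power_mono) auto
  also have "\<dots> = exp (- (?p * real K))" by (simp add: exp_of_nat_mult[symmetric] mult.commute)
  also have "\<dots> \<le> exp (- ?l)" using K1 p0 by (simp add: field_simps)
  also have "\<dots> = 1 / ?N" using N0 by (simp add: exp_minus inverse_eq_divide)
  finally have pw: "(1 - ?p)^K \<le> 1 / ?N" .
  have "expected_T n r s \<le> ennreal (real K + ?N * (1 - ?p)^K / ?p)" by (rule upper[OF rn p0 p1])
  moreover have "0 \<le> real K + ?N * (1 - ?p)^K / ?p" using p0 p1 by simp
  ultimately have "enn2real (expected_T n r s) \<le> real K + ?N * (1 - ?p)^K / ?p"
    using enn2real_mono[OF _ ennreal_less_top] by fastforce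
  also have "?N * (1 - ?p)^K / ?p \<le> ?N * (1 / ?N) / ?p"
    using pw p0 N0 by (intro divide_right_mono mult_left_mono) auto
  also have "?N * (1 / ?N) / ?p = 1 / ?p" using N0 by simp
  finally have E: "enn2real (expected_T n r s) \<le> ?l / ?p + 1 + 1 / ?p" using K2 by linarith
  have pdef: "?p = real (r choose s) / ?N" unfolding g_def ..
  have c0: "real (r choose s) > 0" using p0 pdef N0 by (simp add: zero_less_divide_iff)
  have L: "?N * ?l / real (r choose s) = ?l / ?p" using pdef N0 c0 by simp
  have "enn2real (expected_T n r s) / (?N * ?l / real (r choose s)) \<le> (?l / ?p + 1 + 1 / ?p) / (?l / ?p)"
    unfolding L using E l0 p0 by (intro divide_right_mono) auto
  also have "\<dots> = 1 + ?p / ?l + 1 / ?l" using l0 p0 by (simp add: field_simps)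
  also have "\<dots> \<le> 1 + 2 / ?l" using p1 l0 by (simp add: field_simps)
  finally show ?thesis .
qed



lemma lower_ratio:
  assumes rn: "r \<le> n" and s2: "2 * s \<le> n" and s1: "1 \<le> s" and p0: "g n r s > 0"
    and e0: "0 < \<epsilon>" and e1: "\<epsilon> < 1" and pe: "g n r s \<le> \<epsilon> / 4" and l0: "ln (real (n choose s)) > 0"
  shows "1 - \<epsilon> - 1 / ln (real (n choose s)) - exp (- (\<epsilon> / 2) * ln (real (n choose s)))
           - real s * real s / real n * exp (4 * real r * real s * ln (real n) / (real n - real s))
         \<le> enn2real (expected_T n r s) / (real (n choose s) * ln (real (n choose s)) / real (r choose s))"
proof -
  let ?p = "g n r s" and ?N = "real (n choose s)" and ?l = "ln (real (n choose s))"
  let ?q = "g n r (Suc s)"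
  let ?w = "1 - 2 * ?p + ?q"
  define L where "L = ?l / ?p"
  define k where "k = nat \<lfloor>(1 - \<epsilon>) * L\<rfloor>"
  define d1 where "d1 = 1 / (?N * (1 - ?p)^k)"
  define d2 where "d2 = real s * real s / real n * (?w / (1 - ?p)^2)^k"
  define D1 where "D1 = exp (- (\<epsilon> / 2) * ?l)"
  define D2 where "D2 = real s * real s / real n * exp (4 * real r * real s * ln (real n) / (real n - real s))"
  have ph: "?p \<le> 1/2" using pe e1 by simp
  have N0: "?N > 0" using l0 by (cases "n choose s = 0") auto
  have L0: "L > 0" unfolding L_def using l0 p0 by simp
  have x0: "0 \<le> (1 - \<epsilon>) * L" using L0 e1 by simp
  have k1: "real k \<le> (1 - \<epsilon>) * L" unfolding k_def using x0 by (rule of_nat_floor)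
  have "real k = of_int \<lfloor>(1 - \<epsilon>) * L\<rfloor>" unfolding k_def using x0 by simp
  then have k2: "(1 - \<epsilon>) * L - 1 \<le> real k" by linarith
  have E: "real k * (1 - d1 - d2) \<le> enn2real (expected_T n r s)"
    unfolding d1_def d2_def by (rule lower2[OF rn s2 s1 p0 ph])
  have lnp: "- ?p - 2 * ?p^2 \<le> ln (1 - ?p)" using p0 ph by (intro ln_one_minus_pos_lower_bound) auto
  have kp: "real k * ?p \<le> (1 - \<epsilon>) * ?l"
    using k1 p0 unfolding L_def by (simp add: field_simps)
  have "real k * (?p + 2 * ?p^2) = (real k * ?p) * (1 + 2 * ?p)" by (simp add: algebra_simps power2_eq_square)
  also have "\<dots> \<le> ((1 - \<epsilon>) * ?l) * (1 + \<epsilon> / 2)"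
    by (rule mult_mono[OF kp]) (use pe p0 l0 e1 in auto)
  also have "\<dots> \<le> (1 - \<epsilon> / 2) * ?l"
  proof -
    have "(1 - \<epsilon>) * (1 + \<epsilon> / 2) \<le> 1 - \<epsilon> / 2" using e0 by (simp add: algebra_simps)
    then show ?thesis using l0 by (metis mult.assoc mult.commute mult_right_mono less_imp_le)
  qed
  finally have kk: "real k * (?p + 2 * ?p^2) \<le> (1 - \<epsilon> / 2) * ?l" .
  have "(1 - ?p)^k = exp (real k * ln (1 - ?p))"
    using ph by (simp add: exp_of_nat_mult)
  also have "\<dots> \<ge> exp (- ((1 - \<epsilon> / 2) * ?l))"
  proof -
    have "real k * (- ?p - 2 * ?p^2) \<le> real k * ln (1 - ?p)" using lnp by (intro mult_left_mono) auto
    moreover have "real k * (- ?p - 2 * ?p^2) = - (real k * (?p + 2 * ?p^2))" by (simp add: algebra_simps)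
    ultimately show ?thesis using kk by simp
  qed
  finally have pk: "exp (- ((1 - \<epsilon> / 2) * ?l)) \<le> (1 - ?p)^k" .
  have "?N * exp (- ((1 - \<epsilon> / 2) * ?l)) = exp ((\<epsilon> / 2) * ?l)"
  proof -
    have "?N = exp ?l" using N0 by simp
    then have "?N * exp (- ((1 - \<epsilon> / 2) * ?l)) = exp ?l * exp (- ((1 - \<epsilon> / 2) * ?l))"
      by simp
    also have "\<dots> = exp (?l + - ((1 - \<epsilon> / 2) * ?l))"
      by (simp only: exp_add)
    also have "?l + - ((1 - \<epsilon> / 2) * ?l) = (\<epsilon> / 2) * ?l" by (simp add: algebra_simps)
    finally show ?thesis .
  qed
  then have "exp ((\<epsilon> / 2) * ?l) \<le> ?N * (1 - ?p)^k" using pk N0 by (metis mult_left_mono less_imp_le)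
  then have d1b: "d1 \<le> D1" unfolding d1_def D1_def
    by (simp add: exp_minus inverse_eq_divide frac_le)
  have d1n: "0 \<le> d1" unfolding d1_def using ph N0 by simp
  have sn: "s < n" using s2 s1 by simp
  have q: "?q = ?p * (real (r - s) / real (n - s))" using g_step[OF sn] .
  have qb: "?q \<le> ?p * (real r / (real n - real s))"
  proof -
    have "real (r - s) \<le> real r" by simp
    then have "real (r - s) / real (n - s) \<le> real r / (real n - real s)"
      using sn by (simp add: of_nat_diff divide_right_mono)
    then show ?thesis unfolding q using p0 by (intro mult_left_mono) auto
  qed
  have q0: "0 \<le> ?q" by (rule g_nonneg)
  have w0: "0 \<le> ?w" using ph q0 by simp
  have "(1/2)^2 \<le> (1 - ?p)^2" using ph by (intro power_mono) auto
  then have pp: "1/4 \<le> (1 - ?p)^2" by (simp add: power2_eq_square)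
  have "?w / (1 - ?p)^2 \<le> 1 + 4 * ?q"
  proof -
    have "?w \<le> (1 - ?p)^2 + ?q" by (simp add: power2_eq_square algebra_simps)
    also have "\<dots> \<le> (1 - ?p)^2 * (1 + 4 * ?q)"
    proof -
      have "?q * 1 \<le> ?q * (4 * (1 - ?p)^2)" using pp q0 by (intro mult_left_mono) auto
      then show ?thesis by (simp add: algebra_simps)
    qed
    finally have "?w \<le> (1 + 4 * ?q) * (1 - ?p)^2" by (simp add: mult.commute)
    moreover have "(1 - ?p)^2 > 0" using ph by simp
    ultimately show ?thesis by (simp add: divide_le_eq)
  qed
  also have "\<dots> \<le> exp (4 * ?q)" using exp_ge_add_one_self[of "4 * ?q"] by simp
  finally have xb: "?w / (1 - ?p)^2 \<le> exp (4 * ?q)" .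
  have "(?w / (1 - ?p)^2)^k \<le> exp (4 * ?q)^k" using xb w0 by (intro power_mono) auto
  also have "\<dots> = exp (4 * (real k * ?q))" by (simp add: exp_of_nat_mult[symmetric] algebra_simps)
  also have "\<dots> \<le> exp (4 * real r * real s * ln (real n) / (real n - real s))"
  proof -
    have lN: "?l \<le> real s * ln (real n)"
    proof -
      have "?N \<le> real n ^ s" using binomial_le_pow[of s n] sn by (metis of_nat_le_iff of_nat_power less_imp_le)
      then have "?l \<le> ln (real n ^ s)" using N0 by (intro ln_mono) auto
      then show ?thesis by (simp add: ln_realpow)
    qed
    have "real k * ?q \<le> ((1 - \<epsilon>) * L) * (?p * (real r / (real n - real s)))"
      using k1 qb q0 by (intro mult_mono) auto
    also have "\<dots> = (1 - \<epsilon>) * ?l * (real r / (real n - real s))" unfolding L_def using p0 by simp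
    also have "\<dots> \<le> ?l * (real r / (real n - real s))"
      using l0 e0 sn by (intro mult_right_mono) (auto simp: mult_le_cancel_right1)
    also have "\<dots> \<le> (real s * ln (real n)) * (real r / (real n - real s))"
      using lN sn by (intro mult_right_mono) auto
    finally have h: "real k * ?q \<le> (real s * ln (real n)) * (real r / (real n - real s))" .
    have "4 * ((real s * ln (real n)) * (real r / (real n - real s))) = 4 * real r * real s * ln (real n) / (real n - real s)"
      using sn by (simp add: field_simps)
    then have "4 * (real k * ?q) \<le> 4 * real r * real s * ln (real n) / (real n - real s)"
      using h by linarith
    then show ?thesis by simp
  qed
  finally have d2b: "d2 \<le> D2" unfolding d2_def D2_def by (intro mult_left_mono) auto
  have d2n: "0 \<le> d2" unfolding d2_def using w0 by simp
  have "(1 - \<epsilon>) * L - 1 - L * (D1 + D2) \<le> real k - real k * (d1 + d2)"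
  proof -
    have "real k * (d1 + d2) \<le> L * (D1 + D2)"
    proof -
      have "(1 - \<epsilon>) * L \<le> L" using e0 L0 by (simp add: algebra_simps)
      then have "real k \<le> L" using k1 by linarith
      then show ?thesis using L0 d1b d2b d1n d2n by (intro mult_mono) auto
    qed
    then show ?thesis using k2 by linarith
  qed
  also have "\<dots> = real k * (1 - d1 - d2)" by (simp add: algebra_simps)
  finally have EE: "(1 - \<epsilon>) * L - 1 - L * (D1 + D2) \<le> enn2real (expected_T n r s)" using E by linarith
  have pdef: "?p = real (r choose s) / ?N" unfolding g_def ..
  have c0: "real (r choose s) > 0" using p0 pdef N0 by (simp add: zero_less_divide_iff)
  have LL: "?N * ?l / real (r choose s) = L" unfolding L_def using pdef N0 c0 by simp
  have "1 - \<epsilon> - 1 / ?l - D1 - D2 \<le> 1 - \<epsilon> - 1 / L - D1 - D2"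
  proof -
    have "1 / L \<le> 1 / ?l" unfolding L_def using p0 ph l0 by (simp add: field_simps)
    then show ?thesis by linarith
  qed
  also have "\<dots> = ((1 - \<epsilon>) * L - 1 - L * (D1 + D2)) / L" using L0 by (simp add: field_simps)
  also have "\<dots> \<le> enn2real (expected_T n r s) / L" using EE L0 by (intro divide_right_mono) auto
  finally show ?thesis unfolding LL D1_def D2_def .
qed



theorem theorem1:
  fixes r s :: nat
  assumes "1 \<le> s" and "s \<le> r"
  shows "(\<lambda>n. enn2real (expected_T n r s) /
            (real (n choose s) * ln (real (n choose s)) / real (r choose s)))
         \<longlonglongrightarrow> 1"
proof -
  note s1 = assms(1) and sr = assms(2)
  define R where "R n = enn2real (expected_T n r s) /
            (real (n choose s) * ln (real (n choose s)) / real (r choose s))" for n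
  define l where "l n = ln (real (n choose s))" for n
  have ltop: "filterlim l at_top sequentially" unfolding l_def by (rule lnN_top[OF s1])
  have l0: "eventually (\<lambda>n. 0 < l n) sequentially"
    using ltop by (simp add: filterlim_at_top_dense)
  have linv: "(\<lambda>n. 1 / l n) \<longlonglongrightarrow> 0"
    by (intro tendsto_divide_0[OF tendsto_const] filterlim_at_top_imp_at_infinity ltop)
  have p0: "eventually (\<lambda>n. 0 < g n r s) sequentially"
    using eventually_ge_at_top[of r]
  proof eventually_elim
    case (elim n)
    then show ?case using sr unfolding g_def by simp
  qed
  have rn: "eventually (\<lambda>n. r \<le> n) sequentially" by (rule eventually_ge_at_top)
  have s2: "eventually (\<lambda>n. 2 * s \<le> n) sequentially" by (rule eventually_ge_at_top)
  have D2: "(\<lambda>n. real s * real s / real n * exp (4 * real r * real s * ln (real n) / (real n - real s))) \<longlonglongrightarrow> 0"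
    by real_asymp
  show ?thesis
    unfolding R_def[symmetric]
  proof (rule order_tendstoI)
    fix a :: real assume a: "1 < a"
    have "eventually (\<lambda>n. 2 * (1 / l n) < a - 1) sequentially"
      using tendsto_mult[OF tendsto_const linv, of 2] a by (intro order_tendstoD(2)) auto
    with rn p0 l0 show "eventually (\<lambda>n. R n < a) sequentially"
    proof eventually_elim
      case (elim n)
      have "R n \<le> 1 + 2 / l n" unfolding R_def l_def
        using upper_ratio[of r n s] elim g_le1[of r n s] unfolding l_def by simp
      then show ?case using elim by simp
    qed
  next
    fix a :: real assume a: "a < 1"
    define \<epsilon> where "\<epsilon> = min ((1 - a) / 2) (1 / 2)"
    have e0: "0 < \<epsilon>" "\<epsilon> < 1" "\<epsilon> < 1 - a"
      using a min.cobounded1[of "(1 - a) / 2" "1/2"] unfolding \<epsilon>_def by auto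
    have ex: "(\<lambda>n. exp (- (\<epsilon> / 2) * l n)) \<longlonglongrightarrow> 0"
    proof -
      have "((\<lambda>x. exp (- (\<epsilon> / 2) * x)) \<longlongrightarrow> 0) at_top" using e0(1) by real_asymp
      then show ?thesis using ltop by (rule filterlim_compose)
    qed
    have err: "(\<lambda>n. 1 / l n + exp (- (\<epsilon> / 2) * l n) + real s * real s / real n * exp (4 * real r * real s * ln (real n) / (real n - real s))) \<longlonglongrightarrow> 0 + 0 + 0"
      by (intro tendsto_add linv ex D2)
    have ev1: "eventually (\<lambda>n. 1 / l n + exp (- (\<epsilon> / 2) * l n) + real s * real s / real n * exp (4 * real r * real s * ln (real n) / (real n - real s)) < 1 - a - \<epsilon>) sequentially"
      using err e0 by (intro order_tendstoD(2)) auto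
    have ev2: "eventually (\<lambda>n. g n r s < \<epsilon> / 4) sequentially"
      using p_zero[OF s1, of r] e0 by (intro order_tendstoD(2)) auto
    from ev1 ev2 rn s2 p0 l0 show "eventually (\<lambda>n. a < R n) sequentially"
    proof eventually_elim
      case (elim n)
      have "1 - \<epsilon> - 1 / l n - exp (- (\<epsilon> / 2) * l n)
           - real s * real s / real n * exp (4 * real r * real s * ln (real n) / (real n - real s)) \<le> R n"
        unfolding R_def l_def using lower_ratio[of r n s \<epsilon>] elim e0 s1 unfolding l_def by simp
      then show ?case using elim by simp
    qed
  qed
qed

end
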